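(* Let $(V,\mathcal H,\iota,W)$ be an abelian generalized functional theory with set of weights $\Omega$. Then $\iota^*(\mathcal P)=\iota^*(\mathcal E)=\mathrm{conv}(\Omega)$.
   Context: A generalized functional theory is a tuple $(V,\mathcal H,\iota,W)$ with $V$ a finite-dimensional real vector space, $\mathcal H$ a finite-dimensional complex Hilbert space, $\iota:V\to i\mathfrak u(\mathcal H)$ a linear map into the Hermitian operators, and $W$ Hermitian. States are regarded as linear functionals on $i\mathfrak u(\mathcal H)$ via the trace; $\iota^*$ is the dual map, $\langle\iota^*(\Gamma),v\rangle=\mathrm{Tr}(\Gamma\iota(v))$. $\mathcal P$ is the set of pure states (rank-one orthogonal projectors) and $\mathcal E$ the set of density operators. The theory is abelian if $[\iota(v),\iota(v')]=0$ for all $v,v'$. A weight is an $\alpha\in V^*$ for which there is a nonzero $\psi\in\mathcal H$ with $\iota(v)\psi=\langle\alpha,v\rangle\psi$ for all $v\in V$; $\Omega$ is the set of weights. *)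

theory Defs
  imports "HOL-Analysis.Analysis"
begin

text \<open>Operators on H = complex^'n are represented as matrices complex^'n^'n.\<close>

definition hermitian :: "complex^'n^'n \<Rightarrow> bool" where
  "hermitian A \<longleftrightarrow> (\<forall>i j. A$i$j = cnj (A$j$i))"

definition cinner :: "complex^'n \<Rightarrow> complex^'n \<Rightarrow> complex" where
  "cinner x y = (\<Sum>i\<in>UNIV. cnj (x$i) * y$i)"

definition pure_states :: "(complex^'n^'n) set" where
  "pure_states = {\<Gamma>. \<exists>\<psi>::complex^'n. cinner \<psi> \<psi> = 1 \<and>
                          \<Gamma> = (\<chi> i j. \<psi>$i * cnj (\<psi>$j))}"

definition density_ops :: "(complex^'n^'n) set" where
  "density_ops = {\<Gamma>. hermitian \<Gamma> \<and> (\<forall>x. 0 \<le> Re (cinner x (\<Gamma> *v x))) \<and> trace \<Gamma> = 1}"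

definition gft :: "('v::real_vector \<Rightarrow> complex^'n^'n) \<Rightarrow> complex^'n^'n \<Rightarrow> bool" where
  "gft \<iota> W \<longleftrightarrow> linear \<iota> \<and> (\<forall>v. hermitian (\<iota> v)) \<and> hermitian W"

definition abelian :: "('v \<Rightarrow> complex^'n^'n) \<Rightarrow> bool" where
  "abelian \<iota> \<longleftrightarrow> (\<forall>v v'. \<iota> v ** \<iota> v' = \<iota> v' ** \<iota> v)"

definition dual_map :: "('v \<Rightarrow> complex^'n^'n) \<Rightarrow> complex^'n^'n \<Rightarrow> ('v \<Rightarrow> real)" where
  "dual_map \<iota> \<Gamma> = (\<lambda>v. Re (trace (\<Gamma> ** \<iota> v)))"

definition weights :: "('v::real_vector \<Rightarrow> complex^'n^'n) \<Rightarrow> ('v \<Rightarrow> real) set" where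
  "weights \<iota> = {\<alpha>. linear \<alpha> \<and> (\<exists>\<psi>::complex^'n. \<psi> \<noteq> 0 \<and>
                  (\<forall>v. \<iota> v *v \<psi> = complex_of_real (\<alpha> v) *s \<psi>))}"

definition conv_dual :: "('v \<Rightarrow> real) set \<Rightarrow> ('v \<Rightarrow> real) set" where
  "conv_dual S = {(\<lambda>v. \<Sum>i<m. c i * f i v) | (m::nat) c f.
                    (\<forall>i<m. 0 \<le> c i \<and> f i \<in> S) \<and> (\<Sum>i<m. c i) = 1}"

end

theory Submission
  imports Defs
begin

lemma inner_vec_cinner: "(x::complex^'n) \<bullet> y = Re (cinner x y)"
  by (simp add: inner_vec_def cinner_def inner_complex_def Re_sum)

lemma scaleR_comp: "((c::real) *\<^sub>R (x::complex^'n))$i = complex_of_real c * x$i"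
  by (subst vector_scaleR_component) (rule scaleR_conv_of_real)

lemma scaleR_comp2: "((c::real) *\<^sub>R (A::complex^'n^'m))$i$j = complex_of_real c * A$i$j"
  by (subst vector_scaleR_component) (rule scaleR_comp)

lemma ofreal_smult: "complex_of_real c *s (x::complex^'n) = c *\<^sub>R x"
  by (simp add: vec_eq_iff scaleR_comp del: vector_scaleR_component)

lemma mv_add: "(A::complex^'n^'m) *v (x + y) = A *v x + A *v y"
  by (simp add: matrix_vector_right_distrib)

lemma mv_scaleR: "(A::complex^'n^'m) *v (c *\<^sub>R x) = c *\<^sub>R (A *v x)"
  by (simp add: vec_eq_iff matrix_vector_mult_def scaleR_comp sum_distrib_left algebra_simps del: vector_scaleR_component)

lemma mv_smult: "(A::complex^'n^'m) *v (c *s x) = c *s (A *v x)"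
  by (simp add: vec_eq_iff matrix_vector_mult_def sum_distrib_left algebra_simps)

lemma madd_v: "((A::complex^'n^'m) + B) *v x = A *v x + B *v x"
  by (simp add: vec_eq_iff matrix_vector_mult_def sum.distrib algebra_simps)

lemma mscale_v: "((c::real) *\<^sub>R (A::complex^'n^'m)) *v x = c *\<^sub>R (A *v x)"
  by (simp add: vec_eq_iff matrix_vector_mult_def scaleR_comp scaleR_comp2 sum_distrib_left algebra_simps del: vector_scaleR_component)

lemma msum_v: "(sum f F :: complex^'n^'m) *v x = sum (\<lambda>b. f b *v x) F"
  by (induction F rule: infinite_finite_induct) (auto simp: madd_v)

lemma linear_mv: "linear (\<lambda>x. (A::complex^'n^'m) *v x)"
  by (rule linearI) (simp_all add: mv_add mv_scaleR)

lemma cinner_herm: "hermitian A \<Longrightarrow> cinner (A *v x) y = cinner x (A *v y)"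
proof -
  assume h: "hermitian A"
  have "cinner (A *v x) y = (\<Sum>i\<in>UNIV. \<Sum>j\<in>UNIV. A$j$i * cnj (x$j) * y$i)"
    unfolding cinner_def matrix_vector_mult_def vec_lambda_beta cnj_sum sum_distrib_right
    apply (rule sum.cong, simp, rule sum.cong, simp)
    using h unfolding hermitian_def by (metis complex_cnj_mult)
  also have "\<dots> = (\<Sum>j\<in>UNIV. \<Sum>i\<in>UNIV. A$j$i * cnj (x$j) * y$i)"
    by (rule sum.swap)
  also have "\<dots> = cinner x (A *v y)"
    unfolding cinner_def matrix_vector_mult_def vec_lambda_beta sum_distrib_left
    by (rule sum.cong, simp, rule sum.cong, simp_all add: ac_simps)
  finally show ?thesis .
qed

lemma cinner_add_left: "cinner (x + y) z = cinner x z + cinner y z"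
  by (simp add: cinner_def sum.distrib algebra_simps)
lemma cinner_add_right: "cinner z (x + y) = cinner z x + cinner z y"
  by (simp add: cinner_def sum.distrib algebra_simps)
lemma cinner_smult_left: "cinner (c *s x) z = cnj c * cinner x z"
  by (simp add: cinner_def sum_distrib_left algebra_simps)
lemma cinner_smult_right: "cinner z (c *s x) = c * cinner z x"
  by (simp add: cinner_def sum_distrib_left algebra_simps)
lemma cinner_scaleR_left: "cinner (c *\<^sub>R x) z = complex_of_real c * cinner x z"
  using cinner_smult_left[where c="complex_of_real c" and x=x and z=z] by (simp add: ofreal_smult)
lemma cinner_scaleR_right: "cinner z (c *\<^sub>R x) = complex_of_real c * cinner z x"
  using cinner_smult_right[where c="complex_of_real c" and x=x and z=z] by (simp add: ofreal_smult)
lemma cinner_zero_left: "cinner 0 z = 0" by (simp add: cinner_def)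
lemma cinner_zero_right: "cinner z 0 = 0" by (simp add: cinner_def)
lemma cinner_sum_left: "cinner (sum f F) z = (\<Sum>i\<in>F. cinner (f i) z)"
  by (induction F rule: infinite_finite_induct) (auto simp: cinner_add_left cinner_zero_left)
lemma cinner_sum_right: "cinner z (sum f F) = (\<Sum>i\<in>F. cinner z (f i))"
  by (induction F rule: infinite_finite_induct) (auto simp: cinner_add_right cinner_zero_right)
lemma cinner_self_norm: "cinner x x = complex_of_real ((norm x)^2)"
proof -
  have "cinner x x = (\<Sum>i\<in>UNIV. complex_of_real ((cmod (x$i))^2))"
    unfolding cinner_def by (rule sum.cong) (simp_all add: complex_norm_square[symmetric] mult.commute)
  also have "\<dots> = complex_of_real ((norm x)^2)"
    unfolding norm_vec_def L2_set_def by (simp add: sum_nonneg)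
  finally show ?thesis .
qed
lemma cinner_cnj: "cinner y x = cnj (cinner x y)"
  unfolding cinner_def cnj_sum by (rule sum.cong) (simp_all add: mult.commute)

lemma trace_comm: "trace ((A::'a::comm_semiring_1^'n^'n) ** B) = trace (B ** A)"
  unfolding trace_def matrix_matrix_mult_def vec_lambda_beta
  apply (subst sum.swap) by (simp add: mult.commute)

lemma quad_zero:
  fixes r C :: real
  assumes "\<forall>t. 2*t*r \<le> t^2 * C"
  shows "r = 0"
proof (rule ccontr)
  assume r: "r \<noteq> 0"
  define d where "d = \<bar>C\<bar> + 1"
  define t where "t = r / d"
  have p: "d > 0" unfolding d_def by simp
  have "2*t*r \<le> t^2 * C" using assms by blast
  hence "(2*t*r) * d^2 \<le> (t^2 * C) * d^2"
    by (rule mult_right_mono) simp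
  moreover have "(2*t*r) * d^2 = r^2 * (2*d)"
    using p unfolding t_def by (simp add: field_simps power2_eq_square)
  moreover have "(t^2 * C) * d^2 = r^2 * C"
    using p unfolding t_def by (simp add: field_simps power2_eq_square)
  ultimately have "r^2 * (2*d) \<le> r^2 * C" by simp
  moreover have "r^2 > 0" using r by simp
  ultimately have "2*d \<le> C"
    using mult_le_cancel_left_pos by blast
  hence "2*(\<bar>C\<bar> + 1) \<le> C" unfolding d_def .
  thus False by (cases "C \<ge> 0") auto
qed

lemma herm_inner_sym: "hermitian A \<Longrightarrow> (A *v x) \<bullet> y = x \<bullet> (A *v y)"
  by (simp add: inner_vec_cinner cinner_herm)

lemma herm_eigvec:
  fixes A :: "complex^'n^'n"
  assumes h: "hermitian A" and S: "subspace S" and nz: "S \<noteq> {0}" and inv: "\<forall>x\<in>S. A *v x \<in> S"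
  shows "\<exists>x\<in>S. x \<noteq> 0 \<and> (\<exists>\<mu>::real. A *v x = \<mu> *\<^sub>R x)"
proof -
  define f where "f x = x \<bullet> (A *v x)" for x
  define K where "K = sphere 0 1 \<inter> S"
  have cK: "compact K" unfolding K_def
    by (rule compact_Int_closed[OF compact_sphere closed_subspace[OF S]])
  obtain y where y: "y \<in> S" "y \<noteq> 0" using nz S subspace_0 by blast
  have "y /\<^sub>R norm y \<in> K" using y S unfolding K_def by (simp add: subspace_scale)
  hence neK: "K \<noteq> {}" by blast
  have lin: "bounded_linear (\<lambda>x. (A::complex^'n^'n) *v x)"
    using linear_mv linear_conv_bounded_linear by blast
  have cf: "continuous_on K f" unfolding f_def
    by (intro continuous_intros linear_continuous_on lin)
  obtain x0 where x0: "x0 \<in> K" "\<forall>y\<in>K. f y \<le> f x0"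
    using continuous_attains_sup[OF cK neK cf] by blast
  define \<mu> where "\<mu> = f x0"
  have fscale: "f (c *\<^sub>R z) = c^2 * f z" for c z
    unfolding f_def by (simp add: mv_scaleR power2_eq_square)
  have bound: "f z \<le> \<mu> * (norm z)^2" if z: "z \<in> S" for z
  proof (cases "z = 0")
    case True thus ?thesis by (simp add: f_def)
  next
    case False
    have "z /\<^sub>R norm z \<in> K" using z S False unfolding K_def by (simp add: subspace_scale)
    hence "f (z /\<^sub>R norm z) \<le> \<mu>" using x0 \<mu>_def by blast
    hence "f z / (norm z)^2 \<le> \<mu>" using fscale[of "inverse (norm z)" z]
      by (simp add: power_inverse divide_inverse mult.commute)
    thus ?thesis using False by (simp add: divide_le_eq mult.commute)
  qed
  have x0S: "x0 \<in> S" and nx0: "norm x0 = 1" using x0 K_def by auto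
  define w where "w = A *v x0 - \<mu> *\<^sub>R x0"
  have wS: "w \<in> S" unfolding w_def using inv x0S S by (simp add: subspace_diff subspace_scale)
  have orth: "y \<bullet> w = 0" if yS: "y \<in> S" for y
  proof -
    have "2*t*(y \<bullet> w) \<le> t^2 * (\<mu> * (norm y)^2 - f y)" for t
    proof -
      have "x0 + t *\<^sub>R y \<in> S" using x0S yS S by (simp add: subspace_add subspace_scale)
      hence b: "f (x0 + t *\<^sub>R y) \<le> \<mu> * (norm (x0 + t *\<^sub>R y))^2" by (rule bound)
      have e1: "f (x0 + t *\<^sub>R y) = \<mu> + 2*t*(y \<bullet> (A *v x0)) + t^2 * f y"
        using herm_inner_sym[OF h, of y x0]
        unfolding f_def \<mu>_def by (simp add: mv_add mv_scaleR inner_add_left inner_add_right power2_eq_square inner_commute algebra_simps)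
      have e2: "(norm (x0 + t *\<^sub>R y))^2 = 1 + 2*t*(y \<bullet> x0) + t^2 * (norm y)^2"
      proof -
        have "x0 \<bullet> x0 = 1" using nx0 by (simp add: power2_norm_eq_inner[symmetric])
        thus ?thesis by (simp only: power2_norm_eq_inner) (simp add: inner_add_left inner_add_right inner_commute algebra_simps power2_eq_square)
      qed
      have e3: "y \<bullet> (A *v x0) = y \<bullet> w + \<mu> * (y \<bullet> x0)" unfolding w_def by (simp add: inner_diff_right)
      show ?thesis using b unfolding e1 e2 e3 by (simp add: algebra_simps)
    qed
    thus ?thesis using quad_zero by blast
  qed
  have "w = 0" using orth[OF wS] by simp
  hence "A *v x0 = \<mu> *\<^sub>R x0" unfolding w_def by simp
  moreover have "x0 \<noteq> 0" using nx0 by auto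
  ultimately show ?thesis using x0S by blast
qed

lemma common_eigvec:
  fixes F :: "(complex^'n^'n) set"
  assumes "finite F"
  shows "(\<forall>A\<in>F. hermitian A) \<Longrightarrow> (\<forall>A\<in>F. \<forall>B\<in>F. A ** B = B ** A) \<Longrightarrow> subspace S \<Longrightarrow> S \<noteq> {0}
    \<Longrightarrow> (\<forall>A\<in>F. \<forall>x\<in>S. A *v x \<in> S) \<Longrightarrow> \<exists>x\<in>S. x \<noteq> 0 \<and> (\<forall>A\<in>F. \<exists>\<mu>::real. A *v x = \<mu> *\<^sub>R x)"
  using assms
proof (induction F arbitrary: S rule: finite_induct)
  case empty
  have "0 \<in> S" using empty.prems(3) by (rule subspace_0)
  then obtain x where "x \<in> S" "x \<noteq> 0" using empty.prems(4) by blast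
  thus ?case by blast
next
  case (insert A F)
  have hA: "hermitian A" using insert.prems(1) by simp
  have iA: "\<forall>x\<in>S. A *v x \<in> S" using insert.prems(5) by simp
  obtain x0 \<mu> where "x0 \<in> S" "x0 \<noteq> 0" "A *v x0 = \<mu> *\<^sub>R x0"
    using herm_eigvec[OF hA insert.prems(3) insert.prems(4) iA] by blast
  define S' where "S' = {x\<in>S. A *v x = \<mu> *\<^sub>R x}"
  have sub: "subspace S'" unfolding subspace_def
  proof (intro conjI ballI allI)
    show "0 \<in> S'" using insert.prems(3) unfolding S'_def by (simp add: subspace_0)
  next
    fix x y assume "x \<in> S'" "y \<in> S'"
    thus "x + y \<in> S'" using insert.prems(3) unfolding S'_def
      by (simp add: subspace_add mv_add scaleR_add_right)
  next
    fix c x assume "x \<in> S'"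
    thus "c *\<^sub>R x \<in> S'" using insert.prems(3) unfolding S'_def
      by (simp add: subspace_scale mv_scaleR)
  qed
  have nz: "S' \<noteq> {0}" using \<open>x0 \<in> S\<close> \<open>x0 \<noteq> 0\<close> \<open>A *v x0 = \<mu> *\<^sub>R x0\<close> unfolding S'_def by blast
  have inv: "\<forall>B\<in>F. \<forall>x\<in>S'. B *v x \<in> S'"
  proof (intro ballI)
    fix B x assume B: "B \<in> F" and x: "x \<in> S'"
    have "B *v x \<in> S" using insert.prems(5) B x unfolding S'_def by auto
    moreover have "A *v (B *v x) = \<mu> *\<^sub>R (B *v x)"
    proof -
      have "A *v (B *v x) = (A ** B) *v x" by (simp add: matrix_vector_mul_assoc)
      also have "\<dots> = (B ** A) *v x"
      proof -
        have "A ** B = B ** A" using insert.prems(2) B by blast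
        thus ?thesis by simp
      qed
      also have "\<dots> = B *v (A *v x)" by (simp add: matrix_vector_mul_assoc)
      also have "\<dots> = \<mu> *\<^sub>R (B *v x)" using x unfolding S'_def by (simp add: mv_scaleR)
      finally show ?thesis .
    qed
    ultimately show "B *v x \<in> S'" unfolding S'_def by simp
  qed
  have hF: "\<forall>B\<in>F. hermitian B" using insert.prems(1) by simp
  have cF: "\<forall>B\<in>F. \<forall>C\<in>F. B ** C = C ** B" using insert.prems(2) by simp
  obtain x where x: "x \<in> S'" "x \<noteq> 0" "\<forall>B\<in>F. \<exists>\<mu>::real. B *v x = \<mu> *\<^sub>R x"
    using insert.IH[OF hF cF sub nz inv] by blast
  have "x \<in> S" "A *v x = \<mu> *\<^sub>R x" using x(1) unfolding S'_def by auto
  hence "\<forall>B\<in>insert A F. \<exists>\<mu>::real. B *v x = \<mu> *\<^sub>R x" using x(3) by blast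
  thus ?case using \<open>x \<in> S\<close> x(2) by blast
qed

lemma iota_expand:
  fixes \<iota> :: "'v::euclidean_space \<Rightarrow> complex^'n^'n"
  assumes "linear \<iota>"
  shows "\<iota> v = (\<Sum>b\<in>Basis. (v \<bullet> b) *\<^sub>R \<iota> b)"
proof -
  have "\<iota> v = \<iota> (\<Sum>b\<in>Basis. (v \<bullet> b) *\<^sub>R b)" by (simp add: euclidean_representation)
  also have "\<dots> = (\<Sum>b\<in>Basis. (v \<bullet> b) *\<^sub>R \<iota> b)"
    using assms by (simp add: linear_sum linear_scale o_def)
  finally show ?thesis .
qed

lemma family_eig:
  fixes \<iota> :: "'v::euclidean_space \<Rightarrow> complex^'n^'n"
  assumes g: "gft \<iota> W" and ab: "abelian \<iota>" and S: "subspace S" "S \<noteq> {0}"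
    and inv: "\<forall>v. \<forall>x\<in>S. \<iota> v *v x \<in> S"
  shows "\<exists>x\<in>S. x \<noteq> 0 \<and> (\<forall>v. \<exists>\<mu>::real. \<iota> v *v x = \<mu> *\<^sub>R x)"
proof -
  have lin: "linear \<iota>" and h: "\<forall>v. hermitian (\<iota> v)" using g unfolding gft_def by auto
  obtain x where x: "x \<in> S" "x \<noteq> 0" and ev: "\<forall>A\<in>\<iota> ` Basis. \<exists>\<mu>::real. A *v x = \<mu> *\<^sub>R x"
    using common_eigvec[of "\<iota> ` Basis" S] h ab S inv unfolding abelian_def by auto
  have "\<forall>b\<in>Basis. \<exists>\<mu>::real. \<iota> b *v x = \<mu> *\<^sub>R x" using ev by auto
  then obtain m where m: "\<forall>b\<in>Basis. \<iota> b *v x = m b *\<^sub>R x" using bchoice by meson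
  have "\<iota> v *v x = (\<Sum>b\<in>Basis. (v \<bullet> b) * m b) *\<^sub>R x" for v
  proof -
    have "\<iota> v *v x = (\<Sum>b\<in>Basis. (v \<bullet> b) *\<^sub>R (\<iota> b *v x))"
      by (subst iota_expand[OF lin]) (simp add: msum_v mscale_v)
    also have "\<dots> = (\<Sum>b\<in>Basis. ((v \<bullet> b) * m b) *\<^sub>R x)"
      using m by (intro sum.cong) auto
    also have "\<dots> = (\<Sum>b\<in>Basis. (v \<bullet> b) * m b) *\<^sub>R x" by (simp add: scaleR_sum_left)
    finally show ?thesis .
  qed
  hence "\<forall>v. \<exists>\<mu>::real. \<iota> v *v x = \<mu> *\<^sub>R x" by (intro allI exI)
  thus ?thesis using x by blast
qed

lemma orth_exists:
  fixes e :: "'n \<Rightarrow> complex^'n"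
  assumes a: "a \<notin> K"
  shows "\<exists>x. x \<noteq> 0 \<and> (\<forall>j\<in>K. cinner (e j) x = 0)"
proof -
  define M :: "complex^'n^'n" where "M = (\<chi> j i. if j \<in> K then cnj (e j $ i) else 0)"
  have Mx: "(M *v x) $ j = (if j \<in> K then cinner (e j) x else 0)" for x j
    unfolding M_def matrix_vector_mult_def cinner_def by simp
  have "\<exists>x. x \<noteq> 0 \<and> M *v x = 0"
  proof (rule ccontr)
    assume "\<not> ?thesis"
    hence "\<forall>x. M *v x = 0 \<longrightarrow> x = 0" by blast
    then obtain B where "B ** M = mat 1" using matrix_left_invertible_ker by blast
    hence "M ** B = mat 1" using matrix_left_right_inverse by blast
    hence "(M ** B) $ a $ a = 1" by (simp add: mat_def)
    moreover have "(M ** B) $ a $ a = 0" using a unfolding M_def matrix_matrix_mult_def by simp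
    ultimately show False by simp
  qed
  then obtain x where "x \<noteq> 0" "M *v x = 0" by blast
  thus ?thesis using Mx by (metis zero_index)
qed

lemma greedy:
  fixes \<iota> :: "'v::euclidean_space \<Rightarrow> complex^'n^'n"
  assumes g: "gft \<iota> W" and ab: "abelian \<iota>" and K: "finite K"
  shows "\<exists>e::'n \<Rightarrow> complex^'n. (\<forall>j\<in>K. \<forall>k\<in>K. cinner (e j) (e k) = (if j = k then 1 else 0))
           \<and> (\<forall>j\<in>K. \<forall>v. \<exists>\<mu>::real. \<iota> v *v e j = \<mu> *\<^sub>R e j)"
  using K
proof (induction K rule: finite_induct)
  case empty
  then show ?case by simp
next
  case (insert a K)
  obtain e where on: "\<forall>j\<in>K. \<forall>k\<in>K. cinner (e j) (e k) = (if j = k then 1 else 0)"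
    and ev: "\<forall>j\<in>K. \<forall>v. \<exists>\<mu>::real. \<iota> v *v e j = \<mu> *\<^sub>R e j"
    using insert.IH by blast
  have h: "\<forall>v. hermitian (\<iota> v)" using g unfolding gft_def by auto
  define S where "S = {x. \<forall>j\<in>K. cinner (e j) x = 0}"
  have sub: "subspace S" unfolding subspace_def S_def
    by (simp add: cinner_zero_right cinner_add_right cinner_scaleR_right)
  obtain y where "y \<noteq> 0" "\<forall>j\<in>K. cinner (e j) y = 0" using orth_exists[OF insert.hyps(2)] by blast
  hence nz: "S \<noteq> {0}" unfolding S_def by blast
  have inv: "\<forall>v. \<forall>x\<in>S. \<iota> v *v x \<in> S"
  proof (intro allI ballI)
    fix v x assume x: "x \<in> S"
    have "cinner (e j) (\<iota> v *v x) = 0" if j: "j \<in> K" for j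
    proof -
      obtain \<mu> :: real where m: "\<iota> v *v e j = \<mu> *\<^sub>R e j" using ev j by blast
      have "cinner (e j) (\<iota> v *v x) = cinner (\<iota> v *v e j) x" using cinner_herm[OF h[rule_format, of v]] by simp
      also have "\<dots> = complex_of_real \<mu> * cinner (e j) x" by (simp add: m cinner_scaleR_left)
      also have "\<dots> = 0" using x j unfolding S_def by simp
      finally show ?thesis .
    qed
    thus "\<iota> v *v x \<in> S" unfolding S_def by blast
  qed
  obtain x where x: "x \<in> S" "x \<noteq> 0" and xe: "\<forall>v. \<exists>\<mu>::real. \<iota> v *v x = \<mu> *\<^sub>R x"
    using family_eig[OF g ab sub nz inv] by blast
  define x' where "x' = (1 / norm x) *\<^sub>R x"
  have nx': "norm x' = 1" unfolding x'_def using x(2) by simp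
  have xx: "cinner x' x' = 1" using nx' by (simp add: cinner_self_norm)
  have ox: "cinner (e j) x' = 0" if "j \<in> K" for j
    using x(1) that unfolding S_def x'_def by (simp add: cinner_scaleR_right)
  have ox2: "cinner x' (e j) = 0" if "j \<in> K" for j
    using ox[OF that] by (subst cinner_cnj) simp
  have ex': "\<forall>v. \<exists>\<mu>::real. \<iota> v *v x' = \<mu> *\<^sub>R x'"
  proof
    fix v
    obtain \<mu> :: real where "\<iota> v *v x = \<mu> *\<^sub>R x" using xe by blast
    hence "\<iota> v *v x' = \<mu> *\<^sub>R x'" unfolding x'_def by (simp add: mv_scaleR)
    thus "\<exists>\<mu>::real. \<iota> v *v x' = \<mu> *\<^sub>R x'" by blast
  qed
  define e' where "e' = e(a := x')"
  have "\<forall>j\<in>insert a K. \<forall>k\<in>insert a K. cinner (e' j) (e' k) = (if j = k then 1 else 0)"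
    unfolding e'_def using on xx ox ox2 insert.hyps(2) by auto
  moreover have "\<forall>j\<in>insert a K. \<forall>v. \<exists>\<mu>::real. \<iota> v *v e' j = \<mu> *\<^sub>R e' j"
    unfolding e'_def using ev ex' insert.hyps(2) by auto
  ultimately show ?case by blast
qed

definition pst :: "complex^'n \<Rightarrow> complex^'n^'n" where
  "pst \<psi> = (\<chi> i j. \<psi>$i * cnj (\<psi>$j))"

lemma pst_trace: "trace (pst \<psi> ** B) = cinner \<psi> (B *v \<psi>)"
proof -
  have "trace (pst \<psi> ** B) = (\<Sum>i\<in>UNIV. \<Sum>k\<in>UNIV. \<psi>$i * cnj (\<psi>$k) * B$k$i)"
    unfolding trace_def pst_def matrix_matrix_mult_def by simp
  also have "\<dots> = (\<Sum>k\<in>UNIV. \<Sum>i\<in>UNIV. \<psi>$i * cnj (\<psi>$k) * B$k$i)" by (rule sum.swap)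
  also have "\<dots> = cinner \<psi> (B *v \<psi>)"
    unfolding cinner_def matrix_vector_mult_def vec_lambda_beta sum_distrib_left
    by (rule sum.cong, simp, rule sum.cong, simp_all add: ac_simps)
  finally show ?thesis .
qed

lemma pst_mv: "pst \<psi> *v x = cinner \<psi> x *s \<psi>"
  unfolding pst_def matrix_vector_mult_def cinner_def
  by (simp add: vec_eq_iff sum_distrib_left ac_simps)

lemma pst_density: "cinner \<psi> \<psi> = 1 \<Longrightarrow> pst \<psi> \<in> density_ops"
proof -
  assume n: "cinner \<psi> \<psi> = 1"
  have "hermitian (pst \<psi>)" unfolding hermitian_def pst_def by (simp add: mult.commute)
  moreover have "0 \<le> Re (cinner x (pst \<psi> *v x))" for x
  proof -
    have "cinner x (pst \<psi> *v x) = cinner \<psi> x * cnj (cinner \<psi> x)"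
      by (simp add: pst_mv cinner_smult_right cinner_cnj[of x \<psi>])
    thus ?thesis by (simp add: complex_norm_square[symmetric] del: of_real_power)
  qed
  moreover have "trace (pst \<psi>) = 1"
  proof -
    have "trace (pst \<psi>) = cinner \<psi> \<psi>" unfolding trace_def pst_def cinner_def
      by (simp add: mult.commute)
    thus ?thesis using n by simp
  qed
  ultimately show ?thesis unfolding density_ops_def by blast
qed

lemma pure_eq: "pure_states = {pst \<psi> | \<psi>. cinner \<psi> \<psi> = 1}"
  unfolding pure_states_def pst_def by blast

lemma pure_sub: "pure_states \<subseteq> density_ops"
  using pst_density unfolding pure_eq by blast

lemma onb_unitary:
  fixes e :: "'n \<Rightarrow> complex^'n"
  assumes on: "\<forall>j k. cinner (e j) (e k) = (if j = k then 1 else 0)"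
  defines "U \<equiv> (\<chi> i j. e j $ i)" and "Us \<equiv> (\<chi> i j. cnj (e i $ j))"
  shows "Us ** U = mat 1" "U ** Us = mat 1"
proof -
  show "Us ** U = mat 1"
    unfolding U_def Us_def matrix_matrix_mult_def mat_def vec_eq_iff
    using on unfolding cinner_def by simp
  thus "U ** Us = mat 1" using matrix_left_right_inverse by blast
qed

lemma onb_trace:
  fixes e :: "'n \<Rightarrow> complex^'n"
  assumes on: "\<forall>j k. cinner (e j) (e k) = (if j = k then 1 else 0)"
  shows "trace X = (\<Sum>j\<in>UNIV. cinner (e j) (X *v e j))"
proof -
  define U where "U = (\<chi> i j. e j $ i)"
  define Us where "Us = (\<chi> i j. cnj (e i $ j))"
  have u: "U ** Us = mat 1" using onb_unitary[OF on] unfolding U_def Us_def by blast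
  have "trace X = trace (X ** (U ** Us))" by (simp add: u)
  also have "\<dots> = trace ((X ** U) ** Us)" by (simp add: matrix_mul_assoc)
  also have "\<dots> = trace (Us ** (X ** U))" by (rule trace_comm)
  also have "\<dots> = (\<Sum>j\<in>UNIV. cinner (e j) (X *v e j))"
    unfolding trace_def
  proof (rule sum.cong)
    fix j
    show "(Us ** (X ** U)) $ j $ j = cinner (e j) (X *v e j)"
      unfolding Us_def U_def matrix_matrix_mult_def cinner_def matrix_vector_mult_def by simp
  qed simp
  finally show ?thesis .
qed

lemma onb_nonzero:
  fixes e :: "'n \<Rightarrow> complex^'n"
  assumes on: "\<forall>j k. cinner (e j) (e k) = (if j = k then 1 else 0)" and psi: "\<psi> \<noteq> 0"
  shows "\<exists>j. cinner (e j) \<psi> \<noteq> 0"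
proof (rule ccontr)
  assume "\<not> ?thesis"
  hence z: "\<forall>j. cinner (e j) \<psi> = 0" by blast
  define U where "U = (\<chi> i j. e j $ i)"
  define Us where "Us = (\<chi> i j. cnj (e i $ j))"
  have u: "U ** Us = mat 1" using onb_unitary[OF on] unfolding U_def Us_def by blast
  have "Us *v \<psi> = 0" using z unfolding Us_def matrix_vector_mult_def cinner_def vec_eq_iff by simp
  hence "U *v (Us *v \<psi>) = 0" by simp
  hence "\<psi> = 0" by (simp add: matrix_vector_mul_assoc u)
  thus False using psi by simp
qed

lemma onb_cinner:
  fixes e :: "'n \<Rightarrow> complex^'n"
  assumes on: "\<forall>j k. cinner (e j) (e k) = (if j = k then 1 else 0)"
  shows "cinner (\<Sum>j\<in>UNIV. a j *s e j) (\<Sum>j\<in>UNIV. b j *s e j) = (\<Sum>j\<in>UNIV. cnj (a j) * b j)"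
proof -
  have inner: "cinner (e j) (\<Sum>k\<in>UNIV. b k *s e k) = b j" for j
  proof -
    have "cinner (e j) (\<Sum>k\<in>UNIV. b k *s e k) = (\<Sum>k\<in>UNIV. b k * (if j = k then 1 else 0))"
      by (simp add: cinner_sum_right cinner_smult_right on[rule_format] del: vector_scalar_mult_def)
    also have "\<dots> = b j" by (simp add: if_distrib cong: if_cong)
    finally show ?thesis .
  qed
  show ?thesis by (simp add: cinner_sum_left cinner_smult_left inner)
qed

lemma mv_sum: "(A::complex^'n^'m) *v sum g F = (\<Sum>j\<in>F. A *v g j)"
  by (induction F rule: infinite_finite_induct) (auto simp: mv_add)

lemma Re_ofreal_mult: "Re (complex_of_real a * z) = a * Re z"
  by simp

theorem theorem4p5:
  fixes \<iota> :: "'v::euclidean_space \<Rightarrow> complex^'n^'n" and W :: "complex^'n^'n"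
  assumes "gft \<iota> W" and "abelian \<iota>"
  shows "dual_map \<iota> ` pure_states = dual_map \<iota> ` density_ops
       \<and> dual_map \<iota> ` density_ops = conv_dual (weights \<iota>)"
proof -
  have lin: "linear \<iota>" and h: "\<forall>v. hermitian (\<iota> v)" using assms(1) unfolding gft_def by auto
  obtain e :: "'n \<Rightarrow> complex^'n" where
    on0: "\<forall>j\<in>UNIV. \<forall>k\<in>UNIV. cinner (e j) (e k) = (if j = k then 1 else 0)"
    and ev0: "\<forall>j\<in>UNIV. \<forall>v. \<exists>\<mu>::real. \<iota> v *v e j = \<mu> *\<^sub>R e j"
    using greedy[OF assms(1) assms(2), of UNIV] by auto
  have on: "\<forall>j k. cinner (e j) (e k) = (if j = k then 1 else 0)" using on0 by blast
  define \<alpha> where "\<alpha> j v = Re (cinner (e j) (\<iota> v *v e j))" for j v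
  have ev: "\<iota> v *v e j = \<alpha> j v *\<^sub>R e j" for j v
  proof -
    obtain \<mu> :: real where m: "\<iota> v *v e j = \<mu> *\<^sub>R e j" using ev0 by blast
    have "\<alpha> j v = \<mu>" unfolding \<alpha>_def m using on by (simp add: cinner_scaleR_right)
    thus ?thesis using m by simp
  qed
  have wt: "\<alpha> j \<in> weights \<iota>" for j
  proof -
    have "linear (\<alpha> j)"
    proof (rule linearI)
      fix x y
      show "\<alpha> j (x + y) = \<alpha> j x + \<alpha> j y"
        unfolding \<alpha>_def by (simp add: linear_add[OF lin] madd_v cinner_add_right)
    next
      fix c x
      show "\<alpha> j (c *\<^sub>R x) = c *\<^sub>R \<alpha> j x"
        unfolding \<alpha>_def by (simp add: linear_scale[OF lin] mscale_v cinner_scaleR_right)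
    qed
    moreover have "e j \<noteq> 0" using on cinner_zero_left by (metis one_neq_zero)
    moreover have "\<forall>v. \<iota> v *v e j = complex_of_real (\<alpha> j v) *s e j"
      by (simp add: ev ofreal_smult)
    ultimately show ?thesis unfolding weights_def by blast
  qed
  have P1: "dual_map \<iota> ` pure_states \<subseteq> dual_map \<iota> ` density_ops"
    using pure_sub by blast
  have P2: "dual_map \<iota> ` density_ops \<subseteq> conv_dual (weights \<iota>)"
  proof
    fix y assume "y \<in> dual_map \<iota> ` density_ops"
    then obtain \<Gamma> where G: "\<Gamma> \<in> density_ops" and y: "y = dual_map \<iota> \<Gamma>" by blast
    obtain hh :: "nat \<Rightarrow> 'n" where hh: "bij_betw hh {0..<card (UNIV::'n set)} UNIV"
      using ex_bij_betw_nat_finite[of "UNIV::'n set"] by auto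
    define N where "N = card (UNIV::'n set)"
    have hh': "bij_betw hh {..<N} UNIV" using hh unfolding N_def by (simp add: atLeast0LessThan)
    define c where "c i = Re (cinner (e (hh i)) (\<Gamma> *v e (hh i)))" for i
    define f where "f i = \<alpha> (hh i)" for i
    have reidx: "(\<Sum>i<N. g (hh i)) = (\<Sum>j\<in>UNIV. g j)" for g :: "'n \<Rightarrow> real"
      using sum.reindex_bij_betw[OF hh', of g] by simp
    have "dual_map \<iota> \<Gamma> v = (\<Sum>i<N. c i * f i v)" for v
    proof -
      have "dual_map \<iota> \<Gamma> v = Re (\<Sum>j\<in>UNIV. cinner (e j) ((\<Gamma> ** \<iota> v) *v e j))"
        unfolding dual_map_def using onb_trace[OF on] by simp
      also have "\<dots> = (\<Sum>j\<in>UNIV. \<alpha> j v * Re (cinner (e j) (\<Gamma> *v e j)))"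
        by (simp add: matrix_vector_mul_assoc[symmetric] ev mv_scaleR cinner_scaleR_right)
      also have "\<dots> = (\<Sum>i<N. \<alpha> (hh i) v * Re (cinner (e (hh i)) (\<Gamma> *v e (hh i))))"
        using reidx[of "\<lambda>j. \<alpha> j v * Re (cinner (e j) (\<Gamma> *v e j))"] by simp
      also have "\<dots> = (\<Sum>i<N. c i * f i v)"
        unfolding c_def f_def by (rule sum.cong) (simp_all add: mult.commute)
      finally show ?thesis .
    qed
    hence yeq: "y = (\<lambda>v. \<Sum>i<N. c i * f i v)" using y by auto
    have cpos: "\<forall>i<N. 0 \<le> c i \<and> f i \<in> weights \<iota>"
      using G wt unfolding c_def f_def density_ops_def by auto
    have "(\<Sum>i<N. c i) = Re (\<Sum>j\<in>UNIV. cinner (e j) (\<Gamma> *v e j))"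
      unfolding c_def reidx[of "\<lambda>j. Re (cinner (e j) (\<Gamma> *v e j))"] by simp
    also have "\<dots> = Re (trace \<Gamma>)" using onb_trace[OF on, of \<Gamma>] by simp
    also have "\<dots> = 1" using G unfolding density_ops_def by simp
    finally have "(\<Sum>i<N. c i) = 1" .
    thus "y \<in> conv_dual (weights \<iota>)" unfolding conv_dual_def using yeq cpos by blast
  qed
  have P3: "conv_dual (weights \<iota>) \<subseteq> dual_map \<iota> ` pure_states"
  proof
    fix y assume "y \<in> conv_dual (weights \<iota>)"
    then obtain m :: nat and c f where y: "y = (\<lambda>v. \<Sum>i<m. c i * f i v)"
      and cf: "\<forall>i<m. 0 \<le> c i \<and> f i \<in> weights \<iota>" and s1: "(\<Sum>i<m. c i) = 1"
    proof -
      from \<open>y \<in> conv_dual (weights \<iota>)\<close> have "\<exists>(m::nat) c f. y = (\<lambda>v. \<Sum>i<m. c i * f i v) \<and> (\<forall>i<m. 0 \<le> c i \<and> f i \<in> weights \<iota>) \<and> (\<Sum>i<m. c i) = 1"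
        unfolding conv_dual_def mem_Collect_eq .
      thus ?thesis using that by blast
    qed
    have "\<exists>j. f i = \<alpha> j" if i: "i < m" for i
    proof -
      obtain \<psi> where psi: "\<psi> \<noteq> 0" "\<forall>v. \<iota> v *v \<psi> = complex_of_real (f i v) *s \<psi>"
        using cf i unfolding weights_def by blast
      obtain j where j: "cinner (e j) \<psi> \<noteq> 0" using onb_nonzero[OF on psi(1)] by blast
      have "f i v = \<alpha> j v" for v
      proof -
        have "complex_of_real (f i v) * cinner (e j) \<psi> = cinner (e j) (\<iota> v *v \<psi>)"
          using psi(2) by (simp add: cinner_smult_right)
        also have "\<dots> = cinner (\<iota> v *v e j) \<psi>" using cinner_herm[OF h[rule_format, of v]] by simp
        also have "\<dots> = complex_of_real (\<alpha> j v) * cinner (e j) \<psi>" by (simp add: ev cinner_scaleR_left)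
        finally show ?thesis using j by simp
      qed
      thus ?thesis by blast
    qed
    then obtain J where J: "\<forall>i<m. f i = \<alpha> (J i)" by metis
    define d where "d j = (\<Sum>i<m. if J i = j then c i else 0)" for j
    have dpos: "d j \<ge> 0" for j unfolding d_def using cf by (intro sum_nonneg) auto
    define \<psi> where "\<psi> = (\<Sum>j\<in>UNIV. complex_of_real (sqrt (d j)) *s e j)"
    have sd: "(\<Sum>j\<in>UNIV. d j * g j) = (\<Sum>i<m. c i * g (J i))" for g
    proof -
      have "(\<Sum>j\<in>UNIV. d j * g j) = (\<Sum>j\<in>UNIV. \<Sum>i<m. if J i = j then c i * g j else 0)"
        unfolding d_def sum_distrib_right by (intro sum.cong refl) simp
      also have "\<dots> = (\<Sum>i<m. \<Sum>j\<in>UNIV. if J i = j then c i * g j else 0)" by (rule sum.swap)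
      also have "\<dots> = (\<Sum>i<m. c i * g (J i))" by simp
      finally show ?thesis .
    qed
    have nn: "cinner \<psi> \<psi> = 1"
    proof -
      have "cinner \<psi> \<psi> = (\<Sum>j\<in>UNIV. complex_of_real (d j))"
        unfolding \<psi>_def onb_cinner[OF on] using dpos
        by (intro sum.cong) (simp_all flip: of_real_mult)
      also have "\<dots> = complex_of_real (\<Sum>j\<in>UNIV. d j * 1)" by simp
      also have "\<dots> = 1" unfolding sd using s1 by simp
      finally show ?thesis .
    qed
    have "dual_map \<iota> (pst \<psi>) v = y v" for v
    proof -
      have iv: "\<iota> v *v \<psi> = (\<Sum>j\<in>UNIV. (complex_of_real (sqrt (d j)) * complex_of_real (\<alpha> j v)) *s e j)"
        unfolding \<psi>_def mv_sum mv_smult ev by (simp add: ofreal_smult[symmetric] mult.commute)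
      have "dual_map \<iota> (pst \<psi>) v = Re (cinner \<psi> (\<iota> v *v \<psi>))" unfolding dual_map_def pst_trace ..
      also have "\<dots> = Re (\<Sum>j\<in>UNIV. complex_of_real (d j * \<alpha> j v))"
        unfolding iv unfolding \<psi>_def onb_cinner[OF on] using dpos
        by (intro arg_cong[where f=Re] sum.cong) (simp_all flip: of_real_mult)
      also have "\<dots> = (\<Sum>j\<in>UNIV. d j * \<alpha> j v)" by (simp add: Re_sum)
      also have "\<dots> = (\<Sum>i<m. c i * \<alpha> (J i) v)" by (rule sd)
      also have "\<dots> = y v" unfolding y using J by simp
      finally show ?thesis .
    qed
    hence "y = dual_map \<iota> (pst \<psi>)" by auto
    moreover have "pst \<psi> \<in> pure_states" unfolding pure_eq using nn by blast
    ultimately show "y \<in> dual_map \<iota> ` pure_states" by blast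
  qed
  show ?thesis using P1 P2 P3 by blast
qed

end
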